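(* Fix $V_{\sf P}\ge0$. Let ${\sf OPT}$ denote the oracle policy that knows the realization of $V_{\sf N}$ at time $0$ and at every time recommends two items of the type with the larger base utility (two niche items if $V_{\sf N}>V_{\sf P}$, two popular items otherwise). Then $$\lim_{\delta\to1}\lim_{p\to0}\frac{{\sf Util}({\sf PEAR})}{{\sf Util}({\sf OPT})}=1.$$
   Context: Model. Time $t=0,1,2,\dots$, discount factor $\delta\in[0,1)$. Two item types, popular ${\sf P}$ and niche ${\sf N}$, infinitely many items each; at each time $t$ the platform recommends a set $\pi_t$ of two fresh items of chosen types. Utility of item $i$: $u_i=V_{\tau(i)}+\epsilon_i$; outside option: $u_\emptyset=\epsilon_\emptyset$; all noises i.i.d. Gumbel with scale $1$ and mean $0$. User chooses $c_t=\arg\max_{j\in\pi_t\cup\{\emptyset\}}u_j$. $V_{\sf P}$ is a known constant; $V_{\sf N}$ is drawn once, fixed over time, independent of noise, with $\mathbb P(V_{\sf N}=(1-p)/p)=p$, $\mathbb P(V_{\sf N}=-1)=1-p$, $p\in(0,1)$. ${\sf Util}(\pi)=\sum_{t\ge0}\delta^t\mathbb E[\max_{j\in\pi_t\cup\{\emptyset\}}u_j]$ (expectation also over $V_{\sf N}$). Policy ${\sf PEAR}$: let $\rho_1=\frac{e^{(1-p)/p}}{1+e^{V_{\sf P}}+e^{(1-p)/p}}$, $\rho_2=\frac{e^{-1}}{1+e^{V_{\sf P}}+e^{-1}}$. Maintain counters $S,F$ (initially $0$) and $p_0=p$. At each time $t$: if $p_t\ge p$, recommend one popular and one niche item; if the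 niche item is chosen increment $S$, otherwise increment $F$. If $p_t<p$, recommend two popular items. Then set $p_{t+1}=\left(1+\frac{1-p}{p}\cdot\frac{\rho_2^S(1-\rho_2)^F}{\rho_1^S(1-\rho_1)^F}\right)^{-1}$. *)

theory Defs
  imports "HOL-Probability.Probability"
begin

section \<open>Gumbel noise (scale 1, mean 0, i.e. location -gamma)\<close>

definition gumbel_density :: "real \<Rightarrow> real" where
  "gumbel_density x =
     exp (- (x + euler_mascheroni)) * exp (- exp (- (x + euler_mascheroni)))"

definition gumbel :: "real measure" where
  "gumbel = density lborel (\<lambda>x. ennreal (gumbel_density x))"

definition noise :: "nat \<Rightarrow> (nat \<Rightarrow> real) measure" where
  "noise n = PiM {..<n} (\<lambda>_. gumbel)"

text \<open>A menu is the list of base utilities of the offered options,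
  including the outside option (base utility 0).
  emax: expected utility of the chosen option E[max_j (V_j + eps_j)].
  choice_prob vs j: probability that option j is chosen (the argmax).\<close>
definition emax :: "real list \<Rightarrow> real" where
  "emax vs = integral\<^sup>L (noise (length vs))
      (\<lambda>e. Max ((\<lambda>j. vs ! j + e j) ` {..<length vs}))"

definition choice_prob :: "real list \<Rightarrow> nat \<Rightarrow> real" where
  "choice_prob vs j = measure (noise (length vs))
      {e \<in> space (noise (length vs)).
         \<forall>k<length vs. k \<noteq> j \<longrightarrow> vs ! k + e k < vs ! j + e j}"

definition menu_PN :: "real \<Rightarrow> real \<Rightarrow> real list" where
  "menu_PN VP VN = [VP, VN, 0]"   \<comment> \<open>one popular, one niche; niche is index 1\<close>

definition menu_PP :: "real \<Rightarrow> real list" where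
  "menu_PP VP = [VP, VP, 0]"

definition menu_NN :: "real \<Rightarrow> real list" where
  "menu_NN VN = [VN, VN, 0]"

definition rho1 :: "real \<Rightarrow> real \<Rightarrow> real" where
  "rho1 VP p = exp ((1 - p) / p) / (1 + exp VP + exp ((1 - p) / p))"

definition rho2 :: "real \<Rightarrow> real" where
  "rho2 VP = exp (-1) / (1 + exp VP + exp (-1))"

definition post :: "real \<Rightarrow> real \<Rightarrow> nat \<Rightarrow> nat \<Rightarrow> real" where
  "post VP p S F = inverse (1 + (1 - p) / p *
      ((rho2 VP ^ S * (1 - rho2 VP) ^ F) / (rho1 VP p ^ S * (1 - rho1 VP p) ^ F)))"

definition explores :: "real \<Rightarrow> real \<Rightarrow> nat \<times> nat \<Rightarrow> bool" where
  "explores VP p sf = (post VP p (fst sf) (snd sf) \<ge> p)"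

definition pear_step :: "real \<Rightarrow> real \<Rightarrow> real \<Rightarrow> nat \<times> nat \<Rightarrow> (nat \<times> nat) pmf" where
  "pear_step VP p v sf =
     (if explores VP p sf
      then map_pmf (\<lambda>b. if b then (Suc (fst sf), snd sf) else (fst sf, Suc (snd sf)))
             (bernoulli_pmf (choice_prob (menu_PN VP v) 1))
      else return_pmf sf)"

primrec pear_state :: "real \<Rightarrow> real \<Rightarrow> real \<Rightarrow> nat \<Rightarrow> (nat \<times> nat) pmf" where
  "pear_state VP p v 0 = return_pmf (0, 0)"
| "pear_state VP p v (Suc t) = bind_pmf (pear_state VP p v t) (pear_step VP p v)"

definition pear_reward :: "real \<Rightarrow> real \<Rightarrow> real \<Rightarrow> nat \<Rightarrow> real" where
  "pear_reward VP p v t = measure_pmf.expectation (pear_state VP p v t)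
      (\<lambda>sf. if explores VP p sf then emax (menu_PN VP v) else emax (menu_PP VP))"

definition Util_PEAR :: "real \<Rightarrow> real \<Rightarrow> real \<Rightarrow> real" where
  "Util_PEAR VP p \<delta> =
     p * (\<Sum>t. \<delta> ^ t * pear_reward VP p ((1 - p) / p) t)
   + (1 - p) * (\<Sum>t. \<delta> ^ t * pear_reward VP p (-1) t)"

definition opt_menu :: "real \<Rightarrow> real \<Rightarrow> real list" where
  "opt_menu VP v = (if v > VP then menu_NN v else menu_PP VP)"

definition Util_OPT :: "real \<Rightarrow> real \<Rightarrow> real \<Rightarrow> real" where
  "Util_OPT VP p \<delta> =
     p * (\<Sum>t. \<delta> ^ t * emax (opt_menu VP ((1 - p) / p)))
   + (1 - p) * (\<Sum>t. \<delta> ^ t * emax (opt_menu VP (-1)))"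

end

theory Submission
  imports Defs "HOL-Probability.Sinc_Integral" "HOL-Real_Asymp.Real_Asymp"
begin
definition gu :: "real \<Rightarrow> real" where "gu x = exp (- (x + euler_mascheroni))"

lemma gu_pos: "gu x > 0" by (simp add: gu_def)

lemma gd_eq: "gumbel_density x = gu x * exp (- gu x)"
  by (simp add: gumbel_density_def gu_def)

lemma gd_nonneg: "gumbel_density x \<ge> 0"
  by (simp add: gd_eq gu_pos less_imp_le)

lemma gu_deriv[derivative_intros]: "(gu has_real_derivative - gu x) (at x)"
  unfolding gu_def by (auto intro!: derivative_eq_intros)

lemma gu_cont[continuous_intros]: "isCont gu x"
  unfolding gu_def by (intro continuous_intros)

lemma gu_at_top: "(gu \<longlongrightarrow> 0) at_top"
  unfolding gu_def by real_asymp

lemma gu_at_bot: "filterlim gu at_top at_bot"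
  unfolding gu_def by real_asymp

lemma ftc_UNIV:
  fixes f F :: "real \<Rightarrow> real"
  assumes "\<And>x. (F has_real_derivative f x) (at x)" "\<And>x. isCont f x" "\<And>x. 0 \<le> f x"
    "(F \<longlongrightarrow> A) at_bot" "(F \<longlongrightarrow> B) at_top"
  shows "integrable lborel f" "integral\<^sup>L lborel f = B - A"
proof -
  have *: "set_integrable lborel (einterval (-\<infinity>) \<infinity>) f" "(LBINT x=-\<infinity>..\<infinity>. f x) = B - A"
    by (rule interval_integral_FTC_nonneg; use assms in \<open>auto simp: ereal_tendsto_simps1\<close>)+
  show "integrable lborel f" using *(1) by (simp add: set_integrable_def)
  show "integral\<^sup>L lborel f = B - A" using *(2)
    by (simp add: interval_lebesgue_integral_def set_lebesgue_integral_def)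
qed

lemma ftc_Iio:
  fixes f F :: "real \<Rightarrow> real"
  assumes "\<And>x. (F has_real_derivative f x) (at x)" "\<And>x. isCont f x" "\<And>x. 0 \<le> f x"
    "(F \<longlongrightarrow> A) at_bot"
  shows "set_integrable lborel {..<a} f" "integral\<^sup>L lborel (\<lambda>x. indicator {..<a} x * f x) = F a - A"
proof -
  have c: "isCont F a" using assms(1) DERIV_isCont by blast
  have l: "(F \<longlongrightarrow> F a) (at_left a)"
    using c by (simp add: isCont_def filterlim_at_split)
  have *: "set_integrable lborel (einterval (-\<infinity>) (ereal a)) f" "(LBINT x=-\<infinity>..ereal a. f x) = F a - A"
    by (rule interval_integral_FTC_nonneg; use assms l in \<open>auto simp: ereal_tendsto_simps1\<close>)+
  show "set_integrable lborel {..<a} f" using *(1) by simp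
  show "integral\<^sup>L lborel (\<lambda>x. indicator {..<a} x * f x) = F a - A" using *(2)
    by (simp add: interval_lebesgue_integral_def set_lebesgue_integral_def)
qed

lemma gd_int: "integrable lborel gumbel_density" "integral\<^sup>L lborel gumbel_density = 1"
proof -
  have d: "((\<lambda>x. exp (- gu x)) has_real_derivative gumbel_density x) (at x)" for x
    by (auto intro!: derivative_eq_intros simp: gd_eq)
  have c: "isCont gumbel_density x" for x
    unfolding gd_eq[abs_def] by (intro continuous_intros)
  have b: "((\<lambda>x. exp (- gu x)) \<longlongrightarrow> 0) at_bot"
    by (rule filterlim_compose[OF _ gu_at_bot]) real_asymp
  have t: "((\<lambda>x. exp (- gu x)) \<longlongrightarrow> 1) at_top"
    using tendsto_exp[OF tendsto_minus[OF gu_at_top]] by simp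
  show "integrable lborel gumbel_density" "integral\<^sup>L lborel gumbel_density = 1"
    using ftc_UNIV[OF d c gd_nonneg b t] by auto
qed

lemma gd_meas[measurable]: "gumbel_density \<in> borel_measurable borel"
  unfolding gd_eq[abs_def] gu_def by measurable

lemma space_gumbel[simp]: "space gumbel = UNIV"
  by (simp add: gumbel_def)

lemma sets_gumbel[simp]: "sets gumbel = sets borel"
  by (simp add: gumbel_def)

lemma gumbel_prob: "prob_space gumbel"
proof
  have "emeasure gumbel (space gumbel) = (\<integral>\<^sup>+ x. ennreal (gumbel_density x) \<partial>lborel)"
    by (simp add: gumbel_def emeasure_density)
  also have "\<dots> = ennreal (integral\<^sup>L lborel gumbel_density)"
    by (rule nn_integral_eq_integral) (auto simp: gd_int gd_nonneg)
  finally show "emeasure gumbel (space gumbel) = 1" by (simp add: gd_int)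
qed

lemma gumbel_cdf: "measure gumbel {..<a} = exp (- gu a)"
proof -
  have d: "((\<lambda>x. exp (- gu x)) has_real_derivative gumbel_density x) (at x)" for x
    by (auto intro!: derivative_eq_intros simp: gd_eq)
  have c: "isCont gumbel_density x" for x
    unfolding gd_eq[abs_def] by (intro continuous_intros)
  have b: "((\<lambda>x. exp (- gu x)) \<longlongrightarrow> 0) at_bot"
    by (rule filterlim_compose[OF _ gu_at_bot]) real_asymp
  note * = ftc_Iio[OF d c gd_nonneg b, of a]
  have "emeasure gumbel {..<a} = (\<integral>\<^sup>+ x. ennreal (gumbel_density x) * indicator {..<a} x \<partial>lborel)"
    by (simp add: gumbel_def emeasure_density)
  also have "\<dots> = (\<integral>\<^sup>+ x. ennreal (indicator {..<a} x * gumbel_density x) \<partial>lborel)"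
    by (intro nn_integral_cong) (auto simp: indicator_def)
  also have "\<dots> = ennreal (integral\<^sup>L lborel (\<lambda>x. indicator {..<a} x * gumbel_density x))"
    by (rule nn_integral_eq_integral) (use *(1) in \<open>auto simp: set_integrable_def gd_nonneg\<close>)
  finally show ?thesis using *(2) by (simp add: measure_def)
qed

lemma gumbel_cdf': "measure gumbel {x. x < a} = exp (- gu a)"
  using gumbel_cdf by (simp add: lessThan_def)

lemma gumbel_ccdf: "measure gumbel {x. a \<le> x} = 1 - exp (- gu a)"
proof -
  interpret prob_space gumbel by (rule gumbel_prob)
  have "{x. a \<le> x} = space gumbel - {x. x < a}" by auto
  then show ?thesis using prob_compl[of "{x. x < a}"] gumbel_cdf' by simp
qed

lemma gu2_int: "integrable lborel (\<lambda>x. gu x ^ 2 * exp (- gu x))"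
  "integral\<^sup>L lborel (\<lambda>x. gu x ^ 2 * exp (- gu x)) = 1"
proof -
  have d: "((\<lambda>x. (gu x + 1) * exp (- gu x)) has_real_derivative gu x ^ 2 * exp (- gu x)) (at x)" for x
    by (auto intro!: derivative_eq_intros simp: power2_eq_square algebra_simps)
  have c: "isCont (\<lambda>x. gu x ^ 2 * exp (- gu x)) x" for x
    by (intro continuous_intros)
  have b: "((\<lambda>x. (gu x + 1) * exp (- gu x)) \<longlongrightarrow> 0) at_bot"
    by (rule filterlim_compose[where f=gu and g="\<lambda>t. (t + 1) * exp (- t)", OF _ gu_at_bot]) real_asymp
  have t: "((\<lambda>x. (gu x + 1) * exp (- gu x)) \<longlongrightarrow> 1) at_top"
    using tendsto_mult[OF tendsto_add[OF gu_at_top tendsto_const[of 1]] tendsto_exp[OF tendsto_minus[OF gu_at_top]]]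
    by simp
  show "integrable lborel (\<lambda>x. gu x ^ 2 * exp (- gu x))"
    "integral\<^sup>L lborel (\<lambda>x. gu x ^ 2 * exp (- gu x)) = 1"
    using ftc_UNIV[OF d c _ b t] by auto
qed

lemma key_bound:
  fixes y :: real
  shows "\<bar>y\<bar> * (exp (- y) * exp (- exp (- y))) \<le> exp (- y) ^ 2 * exp (- exp (- y)) + 8 * inverse (1 + y\<^sup>2)"
proof (cases "y < 0")
  case True
  have "1 + (- y) \<le> exp (- y)" by (rule exp_ge_add_one_self)
  then have "\<bar>y\<bar> \<le> exp (- y)" using True by simp
  then have "\<bar>y\<bar> * (exp (- y) * exp (- exp (- y))) \<le> exp (- y) * (exp (- y) * exp (- exp (- y)))"
    by (intro mult_right_mono) auto
  moreover have "0 \<le> 8 * inverse (1 + y\<^sup>2)" by simp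
  moreover have "exp (- y) * (exp (- y) * exp (- exp (- y))) = exp (- y) ^ 2 * exp (- exp (- y))"
    by (simp add: power2_eq_square)
  ultimately show ?thesis by linarith
next
  case False
  then have y0: "y \<ge> 0" by simp
  have e1: "exp (- exp (- y)) \<le> 1" by simp
  have "1 + y/4 \<le> exp (y/4)" by (rule exp_ge_add_one_self)
  then have "(1 + y/4) ^ 4 \<le> exp (y/4) ^ 4" using y0 by (intro power_mono) auto
  also have "exp (y/4) ^ 4 = exp y" by (simp add: exp_of_nat_mult[symmetric])
  finally have ey: "(1 + y/4) ^ 4 \<le> exp y" .
  have poly: "y * (1 + y\<^sup>2) \<le> 8 * (1 + y/4) ^ 4"
  proof -
    have "8 * (1 + y/4) ^ 4 - y * (1 + y\<^sup>2) = 8 + 7*y + y\<^sup>2 * ((y/4 - 2)^2*(1/2) + 1)"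
      by (simp add: power2_eq_square power4_eq_xxxx field_simps eval_nat_numeral)
    moreover have "y\<^sup>2 * ((y/4 - 2)^2*(1/2) + 1) \<ge> 0" by simp
    ultimately show ?thesis using y0 by linarith
  qed
  have "y * (1 + y\<^sup>2) \<le> 8 * exp y" using poly ey by linarith
  then have "y * exp (- y) \<le> 8 * inverse (1 + y\<^sup>2)"
    by (simp add: exp_minus field_simps add_pos_nonneg)
  moreover have "\<bar>y\<bar> * (exp (- y) * exp (- exp (- y))) \<le> y * exp (- y)"
    using y0 e1 by (simp add: mult_left_le mult_left_mono)
  moreover have "0 \<le> exp (- y) ^ 2 * exp (- exp (- y))" by simp
  ultimately show ?thesis by linarith
qed

lemma inv_sq_int: "integrable lborel (\<lambda>x::real. inverse (1 + x\<^sup>2))"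
  using integrable_inverse_1_plus_square by (simp add: set_integrable_def)

lemma gu_meas[measurable]: "gu \<in> borel_measurable borel"
  unfolding gu_def by measurable

lemma inv_shift: "inverse (1 + (x + g)\<^sup>2) \<le> 3 * inverse (1 + x\<^sup>2)" if "0 \<le> g" "g \<le> 1" for x g :: real
proof -
  have "x\<^sup>2 \<le> 2 * (x + g)\<^sup>2 + 2 * g\<^sup>2"
    using sum_squares_ge_zero[of "x + 2*g" 0] by (simp add: power2_eq_square algebra_simps)
  moreover have "g\<^sup>2 \<le> 1" using that by (simp add: power_le_one)
  moreover have "0 \<le> (x + g)\<^sup>2" by simp
  ultimately have "1 + x\<^sup>2 \<le> 3 * (1 + (x + g)\<^sup>2)" by (smt (verit))
  then show ?thesis by (simp add: field_simps add_pos_nonneg)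
qed

lemma gumbel_integrable: "integrable gumbel (\<lambda>x. x)"
proof -
  let ?g = "euler_mascheroni :: real"
  have g0: "0 \<le> ?g" "?g \<le> 1" using euler_mascheroni_pos euler_mascheroni_less_13_over_22 by auto
  have "integrable lborel (\<lambda>x. gumbel_density x *\<^sub>R x)"
  proof (rule Bochner_Integration.integrable_bound)
    show "integrable lborel (\<lambda>x. gu x ^ 2 * exp (- gu x) + 24 * inverse (1 + x\<^sup>2) + gumbel_density x)"
      by (intro Bochner_Integration.integrable_add integrable_mult_right gu2_int inv_sq_int gd_int)
    show "(\<lambda>x. gumbel_density x *\<^sub>R x) \<in> borel_measurable lborel" by measurable
    show "AE x in lborel. norm (gumbel_density x *\<^sub>R x) \<le> norm (gu x ^ 2 * exp (- gu x) + 24 * inverse (1 + x\<^sup>2) + gumbel_density x)"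
    proof (intro AE_I2)
      fix x :: real
      define y where "y = x + ?g"
      have f: "gumbel_density x = exp (- y) * exp (- exp (- y))" "gu x = exp (- y)"
        by (simp_all add: gumbel_density_def gu_def y_def)
      have kb: "\<bar>y\<bar> * gumbel_density x \<le> gu x ^ 2 * exp (- gu x) + 8 * inverse (1 + y\<^sup>2)"
        using key_bound[of y] f by simp
      have "\<bar>x\<bar> \<le> \<bar>y\<bar> + ?g" using g0 by (simp add: y_def)
      then have "\<bar>x\<bar> * gumbel_density x \<le> (\<bar>y\<bar> + ?g) * gumbel_density x"
        by (intro mult_right_mono gd_nonneg)
      also have "\<dots> \<le> \<bar>y\<bar> * gumbel_density x + gumbel_density x"
        using g0 gd_nonneg[of x] by (simp add: distrib_right mult_left_le_one_le)
      finally have 1: "\<bar>x\<bar> * gumbel_density x \<le> gu x ^ 2 * exp (- gu x) + 8 * inverse (1 + y\<^sup>2) + gumbel_density x"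
        using kb by linarith
      have 2: "inverse (1 + y\<^sup>2) \<le> 3 * inverse (1 + x\<^sup>2)" unfolding y_def using inv_shift g0 by blast
      have 3: "0 \<le> gu x ^ 2 * exp (- gu x) + 24 * inverse (1 + x\<^sup>2) + gumbel_density x"
        using gd_nonneg[of x] by (intro add_nonneg_nonneg) auto
      show "norm (gumbel_density x *\<^sub>R x) \<le> norm (gu x ^ 2 * exp (- gu x) + 24 * inverse (1 + x\<^sup>2) + gumbel_density x)"
      proof -
        have "norm (gumbel_density x *\<^sub>R x) = \<bar>x\<bar> * gumbel_density x"
          using gd_nonneg[of x] by (simp add: abs_mult)
        moreover have "norm (gu x ^ 2 * exp (- gu x) + 24 * inverse (1 + x\<^sup>2) + gumbel_density x)
           = gu x ^ 2 * exp (- gu x) + 24 * inverse (1 + x\<^sup>2) + gumbel_density x"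
          using 3 by simp
        ultimately show ?thesis using 1 2 by linarith
      qed
    qed
  qed
  then show ?thesis unfolding gumbel_def
    by (subst integrable_density) (auto simp: gd_nonneg)
qed

lemma gumbel_gu: "integrable gumbel gu" "integral\<^sup>L gumbel gu = 1"
proof -
  have e: "(\<lambda>x. gumbel_density x *\<^sub>R gu x) = (\<lambda>x. gu x ^ 2 * exp (- gu x))"
    by (auto simp: gd_eq power2_eq_square)
  have e': "(\<lambda>x. gumbel_density x * gu x) = (\<lambda>x. gu x ^ 2 * exp (- gu x))"
    by (auto simp: gd_eq power2_eq_square)
  show "integrable gumbel gu" unfolding gumbel_def
    by (subst integrable_density) (auto simp: gd_nonneg e e' gu2_int)
  show "integral\<^sup>L gumbel gu = 1" unfolding gumbel_def
    by (subst integral_density) (auto simp: gd_nonneg e e' gu2_int)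
qed

lemma gumbel_mean: "integral\<^sup>L gumbel (\<lambda>x. x) > -1"
proof -
  interpret prob_space gumbel by (rule gumbel_prob)
  let ?g = "euler_mascheroni :: real"
  have "integral\<^sup>L gumbel (\<lambda>x. 1 - ?g - gu x) \<le> integral\<^sup>L gumbel (\<lambda>x. x)"
  proof (rule integral_mono)
    show "integrable gumbel (\<lambda>x. 1 - ?g - gu x)" using gumbel_gu by auto
    show "integrable gumbel (\<lambda>x. x)" by (rule gumbel_integrable)
    fix x :: real
    have "1 + (- (x + ?g)) \<le> exp (- (x + ?g))" by (rule exp_ge_add_one_self)
    moreover have "gu x = exp (- (x + ?g))" by (simp add: gu_def)
    ultimately show "1 - ?g - gu x \<le> x" by linarith
  qed
  moreover have "integral\<^sup>L gumbel (\<lambda>x. 1 - ?g - gu x) = - ?g"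
    using gumbel_gu prob_space by simp
  ultimately show ?thesis using euler_mascheroni_less_13_over_22 by linarith
qed

lemma all_less_3: "(\<forall>k<(3::nat). P k) \<longleftrightarrow> P 0 \<and> P 1 \<and> P 2"
  by (auto simp: numeral_3_eq_3 numeral_2_eq_2 less_Suc_eq)

lemma lessThan_3: "{..<(3::nat)} = {0,1,2}"
  by (auto simp: numeral_3_eq_3 numeral_2_eq_2 less_Suc_eq)

lemma noise_prob: "prob_space (noise n)"
  unfolding noise_def by (intro prob_space_PiM gumbel_prob)

lemma emax3: "emax [a,b,c] = integral\<^sup>L (noise 3) (\<lambda>e. max (a + e 0) (max (b + e 1) (c + e 2)))"
proof -
  have l: "length [a,b,c] = 3" by simp
  show ?thesis unfolding emax_def l lessThan_3 by (simp add: max.commute max.left_commute)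
qed

lemma choice3: "choice_prob [a,b,c] 1 = measure (noise 3) {e \<in> space (noise 3). a + e 0 < b + e 1 \<and> c + e 2 < b + e 1}"
proof -
  have l: "length [a,b,c] = 3" by simp
  show ?thesis unfolding choice_prob_def l all_less_3 by simp
qed

lemma noise_comp_integrable: 
  fixes f :: "real \<Rightarrow> real"
  assumes "i < n" "integrable gumbel f" "f \<in> borel_measurable borel"
  shows "integrable (noise n) (\<lambda>e. f (e i))" "integral\<^sup>L (noise n) (\<lambda>e. f (e i)) = integral\<^sup>L gumbel f"
proof -
  have d: "distr (noise n) gumbel (\<lambda>\<omega>. \<omega> i) = gumbel"
    unfolding noise_def using assms(1) by (intro distr_PiM_component gumbel_prob) auto
  have m: "(\<lambda>\<omega>. \<omega> i) \<in> measurable (noise n) gumbel"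
    unfolding noise_def using assms(1) by (intro measurable_component_singleton) auto
  have fm: "f \<in> borel_measurable gumbel" using assms(3) by (simp add: measurable_def)
  show "integrable (noise n) (\<lambda>e. f (e i))"
    using integrable_distr_eq[OF m fm] d assms(2) by simp
  show "integral\<^sup>L (noise n) (\<lambda>e. f (e i)) = integral\<^sup>L gumbel f"
    using integral_distr[OF m fm] d by simp
qed

definition "mu = integral\<^sup>L gumbel (\<lambda>x. x)"
definition "m1 = integral\<^sup>L gumbel (\<lambda>x. \<bar>x\<bar>)"

lemma comp_int:
  assumes "i < n"
  shows "integrable (noise n) (\<lambda>e. e i)" "integral\<^sup>L (noise n) (\<lambda>e. e i) = mu"
    "integrable (noise n) (\<lambda>e. \<bar>e i\<bar>)" "integral\<^sup>L (noise n) (\<lambda>e. \<bar>e i\<bar>) = m1"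
proof -
  have m1: "(\<lambda>x::real. x) \<in> borel_measurable borel" by simp
  have m2: "(\<lambda>x::real. \<bar>x\<bar>) \<in> borel_measurable borel" by simp
  have a: "integrable gumbel (\<lambda>x::real. \<bar>x\<bar>)" using gumbel_integrable by (rule integrable_abs)
  note r1 = noise_comp_integrable[OF assms gumbel_integrable m1]
  note r2 = noise_comp_integrable[OF assms a m2]
  show "integrable (noise n) (\<lambda>e. e i)" "integral\<^sup>L (noise n) (\<lambda>e. e i) = mu"
    "integrable (noise n) (\<lambda>e. \<bar>e i\<bar>)" "integral\<^sup>L (noise n) (\<lambda>e. \<bar>e i\<bar>) = m1"
    using r1 r2 unfolding mu_def m1_def by simp_all
qed

lemma comp_meas: "i < n \<Longrightarrow> (\<lambda>e. e i) \<in> borel_measurable (noise n)"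
proof -
  assume "i < n"
  then have "(\<lambda>\<omega>. \<omega> i) \<in> measurable (noise n) gumbel"
    unfolding noise_def by (intro measurable_component_singleton) auto
  then show ?thesis by (simp add: measurable_def)
qed

lemma max3_meas: "(\<lambda>e. max (a + e 0) (max (b + e 1) (c + e 2))) \<in> borel_measurable (noise 3)"
  by (intro borel_measurable_max borel_measurable_add borel_measurable_const comp_meas) auto


lemma max3_int: "integrable (noise 3) (\<lambda>e. max (a + e 0) (max (b + e 1) (c + e 2)))"
proof (rule Bochner_Integration.integrable_bound)
  show "integrable (noise 3) (\<lambda>e. \<bar>a\<bar> + \<bar>b\<bar> + \<bar>c\<bar> + \<bar>e 0\<bar> + \<bar>e 1\<bar> + \<bar>e 2\<bar>)"
  proof -
    interpret prob_space "noise 3" by (rule noise_prob)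
    show ?thesis by (intro Bochner_Integration.integrable_add integrable_const comp_int) auto
  qed
  show "(\<lambda>e. max (a + e 0) (max (b + e 1) (c + e 2))) \<in> borel_measurable (noise 3)" by (rule max3_meas)
  show "AE e in noise 3. norm (max (a + e 0) (max (b + e 1) (c + e 2))) \<le> norm (\<bar>a\<bar> + \<bar>b\<bar> + \<bar>c\<bar> + \<bar>e 0\<bar> + \<bar>e 1\<bar> + \<bar>e 2\<bar>)"
    by (intro AE_I2) (auto simp: max_def)
qed

lemma emax3_lower: "emax [a,b,c] \<ge> a + mu" "emax [a,b,c] \<ge> b + mu"
proof -
  interpret prob_space "noise 3" by (rule noise_prob)
  have "integral\<^sup>L (noise 3) (\<lambda>e. a + e 0) \<le> emax [a,b,c]"
    unfolding emax3 by (intro integral_mono max3_int Bochner_Integration.integrable_add integrable_const comp_int) auto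
  then show "emax [a,b,c] \<ge> a + mu" using comp_int[of 0 3] by (simp add: prob_space)
  have "integral\<^sup>L (noise 3) (\<lambda>e. b + e 1) \<le> emax [a,b,c]"
    unfolding emax3 by (intro integral_mono max3_int Bochner_Integration.integrable_add integrable_const comp_int) auto
  then show "emax [a,b,c] \<ge> b + mu" using comp_int[of 1 3] by (simp add: prob_space)
qed

lemma emax3_upper: assumes "a \<le> M" "b \<le> M" "c \<le> M" shows "emax [a,b,c] \<le> M + 3 * m1"
proof -
  interpret prob_space "noise 3" by (rule noise_prob)
  have "emax [a,b,c] \<le> integral\<^sup>L (noise 3) (\<lambda>e. M + \<bar>e 0\<bar> + \<bar>e 1\<bar> + \<bar>e 2\<bar>)"
    unfolding emax3 using assms
    by (intro integral_mono max3_int Bochner_Integration.integrable_add integrable_const comp_int) auto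
  also have "\<dots> = M + 3 * m1" using comp_int[of _ 3] by (simp add: prob_space)
  finally show ?thesis .
qed

lemma choice_bounds: "0 \<le> choice_prob vs j" "choice_prob vs j \<le> 1"
proof -
  interpret prob_space "noise (length vs)" by (rule noise_prob)
  show "0 \<le> choice_prob vs j" "choice_prob vs j \<le> 1"
    unfolding choice_prob_def by auto
qed

lemma box3:
  assumes "A0 \<in> sets borel" "A1 \<in> sets borel" "A2 \<in> sets borel"
  defines "B \<equiv> PiE {..<3::nat} (\<lambda>i. if i = 0 then A0 else if i = 1 then A1 else A2)"
  shows "B \<in> sets (noise 3)" "measure (noise 3) B = measure gumbel A0 * measure gumbel A1 * measure gumbel A2"
proof -
  interpret G: prob_space gumbel by (rule gumbel_prob)
  interpret finite_product_prob_space "\<lambda>_. gumbel" "{..<3::nat}"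
    by standard auto
  have s: "(if i = 0 then A0 else if i = 1 then A1 else A2) \<in> sets gumbel" for i :: nat
    using assms by auto
  show "B \<in> sets (noise 3)" unfolding B_def noise_def
    by (intro sets_PiM_I_finite) (use s in auto)
  have "measure (noise 3) B = (\<Prod>i\<in>{..<3::nat}. measure gumbel (if i = 0 then A0 else if i = 1 then A1 else A2))"
    unfolding B_def noise_def by (rule finite_measure_PiM_emb) (use s in auto)
  also have "\<dots> = measure gumbel A0 * measure gumbel A1 * measure gumbel A2"
    by (simp add: lessThan_3)
  finally show "measure (noise 3) B = measure gumbel A0 * measure gumbel A1 * measure gumbel A2" .
qed

lemma event_sets: "{e \<in> space (noise 3). a + e 0 < b + e 1 \<and> c + e 2 < b + e 1} \<in> sets (noise 3)"
  by (intro sets.sets_Collect_conj borel_measurable_less borel_measurable_add borel_measurable_const comp_meas) auto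

lemma choice_low: assumes "VP \<ge> 0" shows "choice_prob [VP, -1, 0] 1 < 1"
proof -
  interpret prob_space "noise 3" by (rule noise_prob)
  define E where "E = {e \<in> space (noise 3). VP + e 0 < -1 + e 1 \<and> 0 + e 2 < -1 + e 1}"
  define B where "B = PiE {..<3::nat} (\<lambda>i. if i = 0 then {x::real. 0 \<le> x} else if i = 1 then {x. x < 0} else UNIV)"
  have Bs: "B \<in> sets (noise 3)" and mB: "measure (noise 3) B = measure gumbel {x. 0 \<le> x} * measure gumbel {x. x < 0} * measure gumbel UNIV"
    using box3[of "{x::real. 0 \<le> x}" "{x. x < 0}" UNIV] unfolding B_def by auto
  have Es: "E \<in> sets (noise 3)" unfolding E_def by (rule event_sets)
  have "E \<inter> B = {}"
  proof (safe)
    fix e assume "e \<in> E" "e \<in> B"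
    have "e 0 \<in> {x. 0 \<le> x}" using PiE_mem[OF \<open>e \<in> B\<close>[unfolded B_def], of 0] by simp
    moreover have "e 1 \<in> {x. x < 0}" using PiE_mem[OF \<open>e \<in> B\<close>[unfolded B_def], of 1] by simp
    moreover have "VP + e 0 < -1 + e 1" using \<open>e \<in> E\<close> unfolding E_def by simp
    ultimately have "VP + e 0 < -1 + e 1" "0 \<le> e 0" "e 1 < 0" by auto
    then show "e \<in> {}" using assms by linarith
  qed
  then have "measure (noise 3) (E \<union> B) = measure (noise 3) E + measure (noise 3) B"
    using Es Bs by (intro finite_measure_Union) auto
  moreover have "measure (noise 3) (E \<union> B) \<le> 1" by simp
  moreover have "measure (noise 3) B > 0"
  proof -
    have "gu 0 > 0" by (rule gu_pos)
    then have "exp (- gu 0) < 1" "exp (- gu 0) > 0" by auto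
    moreover have "measure gumbel UNIV = 1" using gumbel_prob prob_space.prob_space by fastforce
    ultimately show ?thesis using mB gumbel_ccdf[of 0] gumbel_cdf'[of 0] by simp
  qed
  ultimately have "measure (noise 3) E < 1" by linarith
  then show ?thesis using choice3[of VP "-1" 0] unfolding E_def by simp
qed

lemma choice_high_lb:
  assumes "v > 0"
  shows "exp (- gu (v/3 - VP)) * (1 - exp (- gu (- v/3))) * exp (- gu (v/3)) \<le> choice_prob [VP, v, 0] 1"
proof -
  interpret prob_space "noise 3" by (rule noise_prob)
  define E where "E = {e \<in> space (noise 3). VP + e 0 < v + e 1 \<and> 0 + e 2 < v + e 1}"
  define B where "B = PiE {..<3::nat} (\<lambda>i. if i = 0 then {x::real. x < v/3 - VP} else if i = 1 then {x. - v/3 \<le> x} else {x. x < v/3})"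
  have Bs: "B \<in> sets (noise 3)" and mB: "measure (noise 3) B = measure gumbel {x. x < v/3 - VP} * measure gumbel {x. - v/3 \<le> x} * measure gumbel {x. x < v/3}"
    using box3[of "{x::real. x < v/3 - VP}" "{x. - v/3 \<le> x}" "{x. x < v/3}"] unfolding B_def by auto
  have Es: "E \<in> sets (noise 3)" unfolding E_def by (rule event_sets)
  have "B \<subseteq> E"
  proof
    fix e assume "e \<in> B"
    have "e 0 \<in> {x. x < v/3 - VP}" using PiE_mem[OF \<open>e \<in> B\<close>[unfolded B_def], of 0] by simp
    moreover have "e 1 \<in> {x. - v/3 \<le> x}" using PiE_mem[OF \<open>e \<in> B\<close>[unfolded B_def], of 1] by simp
    moreover have "e 2 \<in> {x. x < v/3}" using PiE_mem[OF \<open>e \<in> B\<close>[unfolded B_def], of 2] by simp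
    moreover have "e \<in> space (noise 3)" using Bs \<open>e \<in> B\<close> sets.sets_into_space by blast
    ultimately show "e \<in> E" unfolding E_def using assms by auto
  qed
  then have "measure (noise 3) B \<le> measure (noise 3) E"
    using Es by (intro finite_measure_mono) auto
  moreover have "measure (noise 3) B = exp (- gu (v/3 - VP)) * (1 - exp (- gu (- v/3))) * exp (- gu (v/3))"
    unfolding mB gumbel_cdf' gumbel_ccdf ..
  moreover have "choice_prob [VP, v, 0] 1 = measure (noise 3) E"
    unfolding E_def by (rule choice3)
  ultimately show ?thesis by simp
qed

lemma choice_high: "((\<lambda>v. choice_prob [VP, v, 0] 1) \<longlongrightarrow> 1) at_top"
proof (rule tendsto_sandwich)
  show "\<forall>\<^sub>F v in at_top. exp (- gu (v/3 - VP)) * (1 - exp (- gu (- v/3))) * exp (- gu (v/3)) \<le> choice_prob [VP, v, 0] 1"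
    using eventually_gt_at_top[of 0] by eventually_elim (rule choice_high_lb)
  show "\<forall>\<^sub>F v in at_top. choice_prob [VP, v, 0] 1 \<le> 1"
    by (simp add: choice_bounds)
  show "((\<lambda>v. exp (- gu (v/3 - VP)) * (1 - exp (- gu (- v/3))) * exp (- gu (v/3))) \<longlongrightarrow> 1) at_top"
    unfolding gu_def by real_asymp
qed simp

lemma rho1_bounds: "0 < rho1 VP p" "rho1 VP p < 1"
  unfolding rho1_def by (auto simp: field_simps add_pos_pos)
lemma rho2_bounds: "0 < rho2 VP" "rho2 VP < 1"
  unfolding rho2_def by (auto simp: field_simps add_pos_pos)
lemmas rho_bounds = rho1_bounds rho2_bounds

lemma rho21: assumes "0 < p" "p < 1" shows "rho2 VP \<le> rho1 VP p"
proof -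
  have "-1 \<le> (1 - p) / p" using assms by (simp add: field_simps)
  then have e: "exp (-1) \<le> exp ((1 - p) / p)" by simp
  have K: "1 + exp VP > 0" by (simp add: add_pos_pos)
  have "exp (-1) * (1 + exp VP + exp ((1 - p) / p)) \<le> exp ((1 - p) / p) * (1 + exp VP + exp (-1))"
    using mult_right_mono[OF e, of "1 + exp VP"] K by (simp add: algebra_simps)
  then show ?thesis unfolding rho1_def rho2_def
    by (simp add: divide_simps add_pos_pos) 
qed

definition Rat :: "real \<Rightarrow> real \<Rightarrow> nat \<Rightarrow> nat \<Rightarrow> real" where
  "Rat VP p S F = (rho2 VP ^ S * (1 - rho2 VP) ^ F) / (rho1 VP p ^ S * (1 - rho1 VP p) ^ F)"

lemma Rat_pos: "Rat VP p S F > 0"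
  using rho1_bounds[of VP p] rho2_bounds[of VP] unfolding Rat_def by (simp add: divide_pos_pos)

lemma explores_iff: assumes "0 < p" "p < 1"
  shows "explores VP p (S, F) \<longleftrightarrow> Rat VP p S F \<le> 1"
proof -
  define R where "R = Rat VP p S F"
  have R: "R > 0" unfolding R_def by (rule Rat_pos)
  have a: "(1 - p) / p > 0" using assms by simp
  have "(1 - p) / p * R > 0" using a R by (rule mult_pos_pos)
  then have pos: "1 + (1 - p) / p * R > 0" by linarith
  have "explores VP p (S, F) \<longleftrightarrow> p \<le> inverse (1 + (1 - p) / p * R)"
    unfolding explores_def post_def R_def Rat_def by simp
  also have "\<dots> \<longleftrightarrow> p * (1 + (1 - p) / p * R) \<le> 1"
    using pos by (simp add: field_simps)
  also have "p * (1 + (1 - p) / p * R) = p + (1 - p) * R" using assms by (simp add: field_simps)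
  also have "p + (1 - p) * R \<le> 1 \<longleftrightarrow> (1 - p) * R \<le> (1 - p) * 1" by (simp add: algebra_simps)
  also have "\<dots> \<longleftrightarrow> R \<le> 1" using assms mult_le_cancel_left_pos[of "1-p" R 1] by simp
  finally show ?thesis unfolding R_def .
qed

lemma explores_S0: assumes "0 < p" "p < 1" shows "explores VP p (k, 0)"
proof -
  have "rho2 VP ^ k \<le> rho1 VP p ^ k"
    using rho21[OF assms] rho1_bounds[of VP p] rho2_bounds[of VP] by (intro power_mono) auto
  then have "Rat VP p k 0 \<le> 1" unfolding Rat_def using rho1_bounds[of VP p] rho2_bounds[of VP] by simp
  then show ?thesis using explores_iff[OF assms] by simp
qed

lemma not_explores: assumes "0 < p" "p < 1" "1 - rho1 VP p < rho2 VP ^ t * (1 - rho2 VP)"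
  "k + F \<le> t" "1 \<le> F"
  shows "\<not> explores VP p (k, F)"
proof -
  note rb = rho1_bounds[of VP p] rho2_bounds[of VP]
  define r1 r2 where "r1 = rho1 VP p" and "r2 = rho2 VP"
  have b: "0 < r1" "r1 < 1" "0 < r2" "r2 < 1" "r2 \<le> r1" using rb rho21[OF assms(1,2)] unfolding r1_def r2_def by auto
  have "Rat VP p k F = (r2 / r1) ^ k * ((1 - r2) / (1 - r1)) ^ F"
    unfolding Rat_def r1_def r2_def by (simp add: power_divide)
  moreover have "r2 ^ t \<le> (r2 / r1) ^ k"
  proof -
    have "r2 ^ t \<le> r2 ^ k" using b assms(4) by (intro power_decreasing) auto
    also have "\<dots> \<le> (r2 / r1) ^ k" using b by (intro power_mono) (auto simp: field_simps)
    finally show ?thesis .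
  qed
  moreover have "(1 - r2) / (1 - r1) \<le> ((1 - r2) / (1 - r1)) ^ F"
  proof -
    have "1 \<le> (1 - r2) / (1 - r1)" using b by (simp add: field_simps)
    then show ?thesis using assms(5) by (metis power_increasing power_one_right)
  qed
  moreover have "1 < r2 ^ t * ((1 - r2) / (1 - r1))"
    using assms(3) b unfolding r1_def[symmetric] r2_def[symmetric] by (simp add: field_simps)
  moreover have "0 \<le> r2 ^ t" "0 \<le> (1 - r2) / (1 - r1)" using b by auto
  ultimately have "1 < Rat VP p k F"
    by (smt (verit, best) mult_mono)
  then show ?thesis using explores_iff[OF assms(1,2)] by simp
qed

lemma cP_bounds: "0 \<le> choice_prob (menu_PN VP v) 1" "choice_prob (menu_PN VP v) 1 \<le> 1"
  by (rule choice_bounds)+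

lemma set_step: "set_pmf (pear_step VP p v sf) \<subseteq>
   (if explores VP p sf then {(Suc (fst sf), snd sf), (fst sf, Suc (snd sf))} else {sf})"
  unfolding pear_step_def by auto

lemma support_inv:
  assumes "0 < p" "p < 1"
  shows "\<forall>sf \<in> set_pmf (pear_state VP p v t). fst sf + snd sf \<le> t \<and> (snd sf = 0 \<longrightarrow> fst sf = t)"
proof (induction t)
  case 0
  then show ?case by simp
next
  case (Suc t)
  show ?case
  proof
    fix y assume "y \<in> set_pmf (pear_state VP p v (Suc t))"
    then obtain x where x: "x \<in> set_pmf (pear_state VP p v t)" and y: "y \<in> set_pmf (pear_step VP p v x)"
      by auto
    have xi: "fst x + snd x \<le> t" "snd x = 0 \<longrightarrow> fst x = t" using Suc.IH x by auto
    show "fst y + snd y \<le> Suc t \<and> (snd y = 0 \<longrightarrow> fst y = Suc t)"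
    proof (cases "snd x = 0")
      case True
      then have "x = (t, 0)" using xi by (cases x) auto
      then have "explores VP p x" using explores_S0[OF assms] by simp
      then show ?thesis using y set_step[of VP p v x] \<open>x = (t, 0)\<close> by auto
    next
      case False
      then show ?thesis using y set_step[of VP p v x] xi by (auto split: if_splits)
    qed
  qed
qed

lemma pmf_top:
  assumes "0 < p" "p < 1"
  shows "pmf (pear_state VP p v t) (t, 0) = choice_prob (menu_PN VP v) 1 ^ t"
proof (induction t)
  case 0
  then show ?case by simp
next
  case (Suc t)
  let ?c = "choice_prob (menu_PN VP v) 1"
  let ?M = "pear_state VP p v t"
  have step: "pmf (pear_step VP p v x) (Suc t, 0) = ?c * indicator {(t, 0)} x" if x: "x \<in> set_pmf ?M" for x
  proof (cases "x = (t, 0)")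
    case True
    then have ex: "explores VP p x" using explores_S0[OF assms] by simp
    have pre: "(\<lambda>b. if b then (Suc (fst x), snd x) else (fst x, Suc (snd x))) -` {(Suc t, 0)} = {True}"
      using True by (auto split: if_splits)
    have bt: "pmf (bernoulli_pmf ?c) True = ?c" by (rule pmf_bernoulli_True) (use cP_bounds in auto)
    show ?thesis using ex True bt unfolding pear_step_def
      by (simp add: pmf_map pre measure_pmf_single del: One_nat_def)
  next
    case False
    have xi: "fst x + snd x \<le> t" "snd x = 0 \<longrightarrow> fst x = t" using support_inv[OF assms, of VP v t] x by auto
    have "snd x \<noteq> 0" using xi False by (cases x) auto
    then have "(Suc t, 0) \<notin> set_pmf (pear_step VP p v x)"
      using set_step[of VP p v x] xi by (auto split: if_splits)
    then show ?thesis using False by (simp add: set_pmf_iff)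
  qed
  have "pmf (pear_state VP p v (Suc t)) (Suc t, 0) = measure_pmf.expectation ?M (\<lambda>x. pmf (pear_step VP p v x) (Suc t, 0))"
    by (simp add: pmf_bind)
  also have "\<dots> = measure_pmf.expectation ?M (\<lambda>x. ?c * indicator {(t, 0)} x)"
    by (intro integral_cong_AE) (auto simp: AE_measure_pmf_iff step)
  also have "\<dots> = ?c * pmf ?M (t, 0)"
    by (simp add: measure_pmf_single)
  finally show ?case using Suc.IH by simp
qed

definition Pex :: "real \<Rightarrow> real \<Rightarrow> real \<Rightarrow> nat \<Rightarrow> real" where
  "Pex VP p v t = measure_pmf.prob (pear_state VP p v t) {sf. explores VP p sf}"

lemma reward_eq: "pear_reward VP p v t = emax (menu_PP VP) + (emax (menu_PN VP v) - emax (menu_PP VP)) * Pex VP p v t"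
proof -
  let ?M = "pear_state VP p v t"
  let ?A = "emax (menu_PN VP v)" and ?B = "emax (menu_PP VP)"
  have "(\<lambda>sf. if explores VP p sf then ?A else ?B) = (\<lambda>sf. ?B + (?A - ?B) * indicator {sf. explores VP p sf} sf)"
    by (auto simp: indicator_def)
  then have "pear_reward VP p v t = measure_pmf.expectation ?M (\<lambda>sf. ?B + (?A - ?B) * indicator {sf. explores VP p sf} sf)"
    unfolding pear_reward_def by simp
  also have "\<dots> = ?B + (?A - ?B) * Pex VP p v t"
  proof -
    have "integrable (measure_pmf ?M) (\<lambda>sf. indicator {sf. explores VP p sf} sf :: real)"
      by (rule measure_pmf.integrable_const_bound[where B=1]) auto
    then show ?thesis unfolding Pex_def
      by (subst Bochner_Integration.integral_add) (auto simp: measure_pmf.prob_space)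
  qed
  finally show ?thesis .
qed

lemma Pex_bounds:
  assumes "0 < p" "p < 1"
  shows "choice_prob (menu_PN VP v) 1 ^ t \<le> Pex VP p v t" "Pex VP p v t \<le> 1" "0 \<le> Pex VP p v t"
proof -
  have "pmf (pear_state VP p v t) (t, 0) \<le> Pex VP p v t"
    unfolding Pex_def measure_pmf_single[symmetric]
    using explores_S0[OF assms] by (intro measure_pmf.finite_measure_mono) auto
  then show "choice_prob (menu_PN VP v) 1 ^ t \<le> Pex VP p v t" using pmf_top[OF assms] by simp
  show "Pex VP p v t \<le> 1" "0 \<le> Pex VP p v t" unfolding Pex_def by auto
qed

lemma Pex_exact:
  assumes "0 < p" "p < 1" "\<And>k F. k + F \<le> t \<Longrightarrow> 1 \<le> F \<Longrightarrow> \<not> explores VP p (k, F)"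
  shows "Pex VP p v t = choice_prob (menu_PN VP v) 1 ^ t"
proof -
  let ?M = "pear_state VP p v t"
  have "{sf. explores VP p sf} \<inter> set_pmf ?M = {(t, 0)} \<inter> set_pmf ?M"
  proof safe
    fix a b assume "(a, b) \<in> set_pmf ?M" "explores VP p (a, b)"
    then show "a = t" "b = 0" using support_inv[OF assms(1,2), of VP v t] assms(3)[of a b]
      by (auto simp: not_less_eq_eq)
  next
    show "explores VP p (t, 0)" using explores_S0[OF assms(1,2)] .
  qed
  then have "Pex VP p v t = measure_pmf.prob ?M {(t, 0)}"
    unfolding Pex_def by (metis measure_Int_set_pmf)
  then show ?thesis using pmf_top[OF assms(1,2)] by (simp add: measure_pmf_single)
qed

lemma geo_sum: fixes d :: real assumes "0 \<le> d" "d < 1" shows "summable (\<lambda>t. d ^ t)" "(\<Sum>t. d ^ t) = 1 / (1 - d)"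
  using assms by (auto intro!: summable_geometric simp: suminf_geometric)

lemma summable_weighted: fixes d :: real and P :: "nat \<Rightarrow> real" assumes "0 \<le> d" "d < 1" "\<And>t. 0 \<le> P t" "\<And>t. P t \<le> 1"
  shows "summable (\<lambda>t. d ^ t * P t)"
proof (rule summable_comparison_test[OF _ geo_sum(1)[OF assms(1,2)]])
  show "\<exists>N. \<forall>n\<ge>N. norm (d ^ n * P n) \<le> d ^ n"
    using assms by (auto simp: abs_mult intro!: mult_left_le)
qed

lemma sum_reward: fixes d B X :: real and P :: "nat \<Rightarrow> real" assumes "0 \<le> d" "d < 1" "\<And>t. 0 \<le> P t" "\<And>t. P t \<le> 1"
  shows "(\<Sum>t. d ^ t * (B + (X - B) * P t)) = B / (1 - d) + (X - B) * (\<Sum>t. d ^ t * P t)"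
proof -
  note s1 = geo_sum[OF assms(1,2)]
  note s2 = summable_weighted[OF assms]
  have "(\<lambda>t. d ^ t * (B + (X - B) * P t)) = (\<lambda>t. d ^ t * B + (X - B) * (d ^ t * P t))"
    by (auto simp: algebra_simps fun_eq_iff)
  moreover have "(\<Sum>t. d ^ t * B + (X - B) * (d ^ t * P t)) = (\<Sum>t. d ^ t * B) + (\<Sum>t. (X - B) * (d ^ t * P t))"
    by (rule suminf_add[symmetric]) (intro summable_mult2 summable_mult s1 s2)+
  moreover have "(\<Sum>t. d ^ t * B) = B / (1 - d)" using suminf_mult2[OF s1(1), of B] s1(2) by simp
  moreover have "(\<Sum>t. (X - B) * (d ^ t * P t)) = (X - B) * (\<Sum>t. d ^ t * P t)"
    using suminf_mult[OF s2] by simp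
  ultimately show ?thesis by simp
qed

lemma sum_const: fixes d K :: real assumes "0 \<le> d" "d < 1" shows "(\<Sum>t. d ^ t * K) = K / (1 - d)"
  using suminf_mult2[OF geo_sum(1)[OF assms], of K] geo_sum(2)[OF assms] by simp

lemma sum_bounds: fixes d c :: real and P :: "nat \<Rightarrow> real" assumes "0 \<le> d" "d < 1" "\<And>t. 0 \<le> P t" "\<And>t. P t \<le> 1" "0 \<le> c" "c \<le> 1"
  "\<And>t. c ^ t \<le> P t"
  shows "1 / (1 - d * c) \<le> (\<Sum>t. d ^ t * P t)" "(\<Sum>t. d ^ t * P t) \<le> 1 / (1 - d)"
proof -
  have "d * c \<le> d * 1" using assms by (intro mult_left_mono) auto
  then have dc: "0 \<le> d * c" "d * c < 1" using assms by auto
  have "(\<Sum>t. (d * c) ^ t) \<le> (\<Sum>t. d ^ t * P t)"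
    using assms by (intro suminf_le geo_sum(1)[OF dc] summable_weighted) (auto simp: power_mult_distrib intro: mult_left_mono)
  then show "1 / (1 - d * c) \<le> (\<Sum>t. d ^ t * P t)" using geo_sum(2)[OF dc] by simp
  have "(\<Sum>t. d ^ t * P t) \<le> (\<Sum>t. d ^ t)"
    using assms by (intro suminf_le geo_sum(1) summable_weighted) (auto intro: mult_left_le)
  then show "(\<Sum>t. d ^ t * P t) \<le> 1 / (1 - d)" using geo_sum(2)[OF assms(1,2)] by simp
qed

lemma w_lim: "filterlim (\<lambda>p::real. (1 - p) / p) at_top (at_right 0)"
  by real_asymp

lemma ev_w: "\<forall>\<^sub>F p in at_right 0. K \<le> (1 - p) / (p::real)"
  using w_lim unfolding filterlim_at_top by blast

lemma ev_p01: "\<forall>\<^sub>F p in at_right 0. 0 < p \<and> p < (1::real)"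
proof -
  have "\<forall>\<^sub>F p in at_right 0. p \<in> {0::real<..<1}" by (rule eventually_at_right_real) simp
  then show ?thesis by simp
qed

lemma pw: "0 < p \<Longrightarrow> p * ((1 - p) / p) = 1 - (p::real)" by simp

lemma lim_emax_gen:
  assumes lb: "\<forall>\<^sub>F p in at_right 0. (1 - p) / p + mu \<le> E p"
      and ub: "\<forall>\<^sub>F p in at_right 0. E p \<le> (1 - p) / p + 3 * m1"
  shows "((\<lambda>p. p * E p) \<longlongrightarrow> 1) (at_right (0::real))"
proof (rule tendsto_sandwich)
  show "\<forall>\<^sub>F p in at_right 0. (1 - p) + p * mu \<le> p * E p"
    using lb ev_p01 proof eventually_elim
    case (elim p)
    then have "p * ((1 - p) / p + mu) \<le> p * E p" by (intro mult_left_mono) auto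
    then show ?case using elim by (simp add: distrib_left)
  qed
  show "\<forall>\<^sub>F p in at_right 0. p * E p \<le> (1 - p) + p * (3 * m1)"
    using ub ev_p01 proof eventually_elim
    case (elim p)
    then have "p * E p \<le> p * ((1 - p) / p + 3 * m1)" by (intro mult_left_mono) auto
    then show ?case using elim by (simp add: distrib_left)
  qed
  show "((\<lambda>p. (1 - p) + p * mu) \<longlongrightarrow> 1) (at_right 0)"
    by (rule tendsto_eq_intros refl)+ simp
  show "((\<lambda>p. (1 - p) + p * (3 * m1)) \<longlongrightarrow> 1) (at_right 0)"
    by (rule tendsto_eq_intros refl)+ simp
qed

lemma lim_emax_PN: "((\<lambda>p. p * emax (menu_PN VP ((1 - p) / p))) \<longlongrightarrow> 1) (at_right (0::real))"
proof (rule lim_emax_gen)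
  show "\<forall>\<^sub>F p in at_right 0. (1 - p) / p + mu \<le> emax (menu_PN VP ((1 - p) / p))"
    unfolding menu_PN_def by (intro always_eventually allI emax3_lower)
  show "\<forall>\<^sub>F p in at_right 0. emax (menu_PN VP ((1 - p) / p)) \<le> (1 - p) / p + 3 * m1"
    using ev_w[of VP] ev_w[of 0] unfolding menu_PN_def by eventually_elim (rule emax3_upper, auto)
qed

lemma lim_emax_NN: "((\<lambda>p. p * emax (menu_NN ((1 - p) / p))) \<longlongrightarrow> 1) (at_right (0::real))"
proof (rule lim_emax_gen)
  show "\<forall>\<^sub>F p in at_right 0. (1 - p) / p + mu \<le> emax (menu_NN ((1 - p) / p))"
    unfolding menu_NN_def by (intro always_eventually allI emax3_lower)
  show "\<forall>\<^sub>F p in at_right 0. emax (menu_NN ((1 - p) / p)) \<le> (1 - p) / p + 3 * m1"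
    using ev_w[of 0] unfolding menu_NN_def by eventually_elim (rule emax3_upper, auto)
qed

lemma lim_c1: "((\<lambda>p. choice_prob (menu_PN VP ((1 - p) / p)) 1) \<longlongrightarrow> 1) (at_right (0::real))"
  unfolding menu_PN_def by (rule filterlim_compose[OF choice_high w_lim])

lemma lim_rho1: "((\<lambda>p. 1 - rho1 VP p) \<longlongrightarrow> 0) (at_right (0::real))"
  unfolding rho1_def by real_asymp

lemma SL_lim:
  fixes d VP :: real
  assumes d: "0 \<le> d" "d < 1"
  defines "c \<equiv> choice_prob (menu_PN VP (-1)) 1"
  shows "((\<lambda>p. \<Sum>t. d ^ t * Pex VP p (-1) t) \<longlongrightarrow> 1 / (1 - d * c)) (at_right 0)"
proof -
  have c01: "0 \<le> c" "c \<le> 1" unfolding c_def by (rule cP_bounds)+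
  have "d * c \<le> d * 1" using d c01 by (intro mult_left_mono) auto
  then have dc: "0 \<le> d * c" "d * c < 1" using d c01 by auto
  have geo: "summable (\<lambda>t. d ^ t * c ^ t)" "(\<Sum>t. d ^ t * c ^ t) = 1 / (1 - d * c)"
    using geo_sum[OF dc] by (simp_all add: power_mult_distrib)
  show ?thesis
  proof (rule tendstoI)
    fix e :: real assume e: "e > 0"
    have "(\<lambda>N. d ^ N / (1 - d)) \<longlonglongrightarrow> 0 / (1 - d)"
      using d by (intro tendsto_divide LIMSEQ_power_zero tendsto_const) auto
    then have "\<forall>\<^sub>F N in sequentially. d ^ N / (1 - d) < e" using e by (auto dest: order_tendstoD(2))
    then obtain N where N: "d ^ N / (1 - d) < e" by (auto simp: eventually_sequentially)
    have r2: "0 < rho2 VP ^ N * (1 - rho2 VP)" using rho2_bounds[of VP] by simp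
    have ev: "\<forall>\<^sub>F p in at_right 0. 1 - rho1 VP p < rho2 VP ^ N * (1 - rho2 VP)"
      using order_tendstoD(2)[OF lim_rho1 r2] .
    show "\<forall>\<^sub>F p in at_right 0. dist (\<Sum>t. d ^ t * Pex VP p (-1) t) (1 / (1 - d * c)) < e"
      using ev ev_p01 proof eventually_elim
      case (elim p)
      then have p: "0 < p" "p < 1" by auto
      have ex: "Pex VP p (-1) t = c ^ t" if "t \<le> N" for t
        unfolding c_def
      proof (rule Pex_exact[OF p])
        fix k F assume "k + F \<le> t" "1 \<le> F"
        have "rho2 VP ^ N \<le> rho2 VP ^ t" using rho2_bounds[of VP] that by (intro power_decreasing) auto
        then have "rho2 VP ^ N * (1 - rho2 VP) \<le> rho2 VP ^ t * (1 - rho2 VP)"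
          using rho2_bounds[of VP] by (intro mult_right_mono) auto
        then have "1 - rho1 VP p < rho2 VP ^ t * (1 - rho2 VP)" using elim by linarith
        then show "\<not> explores VP p (k, F)" using not_explores[OF p] \<open>k + F \<le> t\<close> \<open>1 \<le> F\<close> by blast
      qed
      have Pb: "0 \<le> Pex VP p (-1) t" "Pex VP p (-1) t \<le> 1" for t using Pex_bounds[OF p] by auto
      define f where "f t = d ^ t * (Pex VP p (-1) t - c ^ t)" for t
      have s1: "summable (\<lambda>t. d ^ t * Pex VP p (-1) t)" using summable_weighted[OF d Pb] .
      have sf: "summable f" unfolding f_def using s1 geo(1) by (simp add: right_diff_distrib summable_diff power_mult_distrib)
      have "(\<Sum>t. d ^ t * Pex VP p (-1) t) - 1 / (1 - d * c) = suminf f"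
        unfolding f_def geo(2)[symmetric] using s1 geo(1)
        by (simp add: right_diff_distrib suminf_diff power_mult_distrib)
      also have "\<dots> = (\<Sum>i. f (i + N)) + (\<Sum>i<N. f i)" by (rule suminf_split_initial_segment[OF sf])
      also have "(\<Sum>i<N. f i) = 0" using ex by (auto simp: f_def intro!: sum.neutral)
      finally have eq: "(\<Sum>t. d ^ t * Pex VP p (-1) t) - 1 / (1 - d * c) = (\<Sum>i. f (i + N))" by simp
      have sfN: "summable (\<lambda>i. f (i + N))" using summable_ignore_initial_segment[OF sf] .
      have bnd: "\<bar>f (i + N)\<bar> \<le> d ^ N * d ^ i" for i
      proof -
        have "\<bar>Pex VP p (-1) (i + N) - c ^ (i + N)\<bar> \<le> 1"
        proof -
          have "0 \<le> c ^ (i + N)" "c ^ (i + N) \<le> 1" using c01 by (auto simp: power_le_one)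
          then show ?thesis using Pb[of "i + N"] by (auto simp: abs_le_iff)
        qed
        then have "d ^ (i + N) * \<bar>Pex VP p (-1) (i + N) - c ^ (i + N)\<bar> \<le> d ^ (i + N) * 1"
          using d by (intro mult_left_mono) auto
        then have "\<bar>f (i + N)\<bar> \<le> d ^ (i + N) * 1" unfolding f_def using d
          by (simp add: abs_mult)
        then show ?thesis by (simp add: power_add mult.commute)
      qed
      have sg: "summable (\<lambda>i. d ^ N * d ^ i)" using geo_sum(1)[OF d] by (rule summable_mult)
      have sa: "summable (\<lambda>i. \<bar>f (i + N)\<bar>)"
        by (rule summable_comparison_test[OF _ sg]) (use bnd in auto)
      have "\<bar>\<Sum>i. f (i + N)\<bar> \<le> (\<Sum>i. \<bar>f (i + N)\<bar>)" by (rule summable_rabs[OF sa])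
      also have "\<dots> \<le> (\<Sum>i. d ^ N * d ^ i)" by (rule suminf_le[OF bnd sa sg])
      also have "\<dots> = d ^ N / (1 - d)" using suminf_mult[OF geo_sum(1)[OF d], of "d ^ N"] geo_sum(2)[OF d] by simp
      finally show ?case using eq N by (simp add: dist_real_def)
    qed
  qed
qed

theorem corollary1:
  fixes VP :: real
  assumes "VP \<ge> 0"
  shows "\<exists>L :: real \<Rightarrow> real.
           (\<forall>\<^sub>F \<delta> in at_left 1.
              ((\<lambda>p. Util_PEAR VP p \<delta> / Util_OPT VP p \<delta>) \<longlongrightarrow> L \<delta>) (at_right 0))
         \<and> (L \<longlongrightarrow> 1) (at_left 1)"
proof -
  define eB where "eB = emax (menu_PP VP)"
  define eL where "eL = emax (menu_PN VP (-1))"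
  define c where "c = choice_prob (menu_PN VP (-1)) 1"
  have c01: "0 \<le> c" "c < 1"
    unfolding c_def using choice_low[OF assms] cP_bounds[of VP "-1"] by (auto simp: menu_PN_def)
  have eBpos: "1 + eB > 0"
  proof -
    have "eB \<ge> VP + mu" unfolding eB_def menu_PP_def by (rule emax3_lower)
    then show ?thesis using gumbel_mean assms unfolding mu_def by linarith
  qed
  define L where "L \<delta> = (1 + eB + (eL - eB) * ((1 - \<delta>) / (1 - \<delta> * c))) / (1 + eB)" for \<delta> :: real
  show ?thesis
  proof (intro exI conjI)
    have "\<forall>\<^sub>F \<delta> in at_left 1. \<delta> \<in> {0::real<..<1}" by (rule eventually_at_left_real) simp
    then show "\<forall>\<^sub>F \<delta> in at_left 1. ((\<lambda>p. Util_PEAR VP p \<delta> / Util_OPT VP p \<delta>) \<longlongrightarrow> L \<delta>) (at_right 0)"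
    proof eventually_elim
      case (elim \<delta>)
      then have d: "0 \<le> \<delta>" "\<delta> < 1" by auto
      have d1: "1 - \<delta> \<noteq> 0" using d by simp
      have "\<delta> * c \<le> \<delta> * 1" using d c01 by (intro mult_left_mono) auto
      then have dc: "1 - \<delta> * c \<noteq> 0" using d by auto
      define SH where "SH p = (\<Sum>t. \<delta> ^ t * Pex VP p ((1 - p) / p) t)" for p
      define SL where "SL p = (\<Sum>t. \<delta> ^ t * Pex VP p (-1) t)" for p
      define A where "A p = emax (menu_PN VP ((1 - p) / p))" for p
      define c1 where "c1 p = choice_prob (menu_PN VP ((1 - p) / p)) 1" for p
      have UP: "\<forall>\<^sub>F p in at_right 0. p * eB / (1 - \<delta>) + (p * A p - p * eB) * SH p
                   + (1 - p) * (eB / (1 - \<delta>) + (eL - eB) * SL p) = Util_PEAR VP p \<delta>"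
        using ev_p01 proof eventually_elim
        case (elim p)
        then have p: "0 < p" "p < 1" by auto
        have s1: "(\<Sum>t. \<delta> ^ t * (eB + (A p - eB) * Pex VP p ((1 - p) / p) t)) = eB / (1 - \<delta>) + (A p - eB) * SH p"
          unfolding SH_def by (rule sum_reward[OF d]) (use Pex_bounds[OF p] in auto)
        have s2: "(\<Sum>t. \<delta> ^ t * (eB + (eL - eB) * Pex VP p (-1) t)) = eB / (1 - \<delta>) + (eL - eB) * SL p"
          unfolding SL_def by (rule sum_reward[OF d]) (use Pex_bounds[OF p] in auto)
        have "Util_PEAR VP p \<delta> = p * (eB / (1 - \<delta>) + (A p - eB) * SH p) + (1 - p) * (eB / (1 - \<delta>) + (eL - eB) * SL p)"
          unfolding Util_PEAR_def reward_eq eB_def[symmetric] eL_def[symmetric] A_def[symmetric] s1 s2 ..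
        then show ?case by (simp add: algebra_simps)
      qed
      have UO: "\<forall>\<^sub>F p in at_right 0. p * emax (menu_NN ((1 - p) / p)) / (1 - \<delta>) + (1 - p) * (eB / (1 - \<delta>))
                  = Util_OPT VP p \<delta>"
        using ev_w[of "VP + 1"] proof eventually_elim
        case (elim p)
        then have "opt_menu VP ((1 - p) / p) = menu_NN ((1 - p) / p)" by (simp add: opt_menu_def)
        moreover have "opt_menu VP (-1) = menu_PP VP" using assms by (simp add: opt_menu_def)
        ultimately show ?case unfolding Util_OPT_def eB_def by (simp add: sum_const[OF d])
      qed
      have SHl: "(SH \<longlongrightarrow> 1 / (1 - \<delta>)) (at_right 0)"
      proof (rule tendsto_sandwich)
        show "\<forall>\<^sub>F p in at_right 0. 1 / (1 - \<delta> * c1 p) \<le> SH p"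
          using ev_p01 proof eventually_elim
          case (elim p)
          then have p: "0 < p" "p < 1" by auto
          show ?case unfolding SH_def c1_def
            by (rule sum_bounds(1)[OF d]) (use Pex_bounds[OF p] cP_bounds in auto)
        qed
        show "\<forall>\<^sub>F p in at_right 0. SH p \<le> 1 / (1 - \<delta>)"
          using ev_p01 proof eventually_elim
          case (elim p)
          then have p: "0 < p" "p < 1" by auto
          show ?case unfolding SH_def
            by (rule sum_bounds(2)[OF d, where c="c1 p"]) (use Pex_bounds[OF p] cP_bounds in \<open>auto simp: c1_def\<close>)
        qed
        show "((\<lambda>p. 1 / (1 - \<delta> * c1 p)) \<longlongrightarrow> 1 / (1 - \<delta>)) (at_right 0)"
        proof -
          have l: "(c1 \<longlongrightarrow> 1) (at_right 0)" unfolding c1_def by (rule lim_c1)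
          show ?thesis using d1 by (auto intro!: tendsto_eq_intros l)
        qed
      qed simp
      have SLl: "(SL \<longlongrightarrow> 1 / (1 - \<delta> * c)) (at_right 0)"
        unfolding SL_def c_def using SL_lim[OF d] .
      have Al: "((\<lambda>p. p * A p) \<longlongrightarrow> 1) (at_right 0)" unfolding A_def by (rule lim_emax_PN)
      have p0: "((\<lambda>p::real. p) \<longlongrightarrow> 0) (at_right 0)" by (rule tendsto_ident_at)
      have num: "((\<lambda>p. p * eB / (1 - \<delta>) + (p * A p - p * eB) * SH p
                   + (1 - p) * (eB / (1 - \<delta>) + (eL - eB) * SL p)) \<longlongrightarrow>
                 1 / (1 - \<delta>) + eB / (1 - \<delta>) + (eL - eB) * (1 / (1 - \<delta> * c))) (at_right 0)"
      proof -
        have t1: "((\<lambda>p. p * eB / (1 - \<delta>)) \<longlongrightarrow> 0 * eB / (1 - \<delta>)) (at_right 0)"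
          using d1 by (intro tendsto_intros p0)
        have t2: "((\<lambda>p. (p * A p - p * eB) * SH p) \<longlongrightarrow> (1 - 0 * eB) * (1 / (1 - \<delta>))) (at_right 0)"
          using d1 by (intro tendsto_intros Al SHl p0)
        have t3: "((\<lambda>p. (1 - p) * (eB / (1 - \<delta>) + (eL - eB) * SL p)) \<longlongrightarrow> (1 - 0) * (eB / (1 - \<delta>) + (eL - eB) * (1 / (1 - \<delta> * c)))) (at_right 0)"
          using d1 by (intro tendsto_intros SLl p0)
        show ?thesis using tendsto_add[OF tendsto_add[OF t1 t2] t3] by (simp add: add.assoc)
      qed
      have den: "((\<lambda>p. p * emax (menu_NN ((1 - p) / p)) / (1 - \<delta>) + (1 - p) * (eB / (1 - \<delta>)))
                 \<longlongrightarrow> (1 + eB) / (1 - \<delta>)) (at_right 0)"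
      proof -
        have t1: "((\<lambda>p. p * emax (menu_NN ((1 - p) / p)) / (1 - \<delta>)) \<longlongrightarrow> 1 / (1 - \<delta>)) (at_right 0)"
          using d1 by (intro tendsto_intros lim_emax_NN)
        have t2: "((\<lambda>p. (1 - p) * (eB / (1 - \<delta>))) \<longlongrightarrow> (1 - 0) * (eB / (1 - \<delta>))) (at_right 0)"
          using d1 by (intro tendsto_intros p0)
        show ?thesis using tendsto_add[OF t1 t2] by (simp add: add_divide_distrib)
      qed
      have "((\<lambda>p. Util_PEAR VP p \<delta> / Util_OPT VP p \<delta>) \<longlongrightarrow>
             (1 / (1 - \<delta>) + eB / (1 - \<delta>) + (eL - eB) * (1 / (1 - \<delta> * c))) / ((1 + eB) / (1 - \<delta>))) (at_right 0)"
        using eBpos d1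
        by (intro tendsto_divide Lim_transform_eventually[OF num UP] Lim_transform_eventually[OF den UO]) auto
      moreover have "(1 / (1 - \<delta>) + eB / (1 - \<delta>) + (eL - eB) * (1 / (1 - \<delta> * c))) / ((1 + eB) / (1 - \<delta>)) = L \<delta>"
      proof -
        have gen: "(1 / a + e / a + f * (1 / b)) / ((1 + e) / a) = (1 + e + f * (a / b)) / (1 + e)"
          if "a \<noteq> 0" "b \<noteq> 0" "1 + e \<noteq> 0" for a b e f :: real
        proof -
          have "1 / a + e / a + f * (1 / b) = (1 + e + f * (a / b)) / a"
            using that by (simp add: field_simps)
          then show ?thesis using that by simp
        qed
        show ?thesis unfolding L_def using gen[OF d1 dc, of eB "eL - eB"] eBpos by simp
      qed
      ultimately show ?case by simp
    qed
    have "1 - 1 * c \<noteq> 0" using c01 by simp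
    then have "((\<lambda>\<delta>::real. (1 - \<delta>) / (1 - \<delta> * c)) \<longlongrightarrow> (1 - 1) / (1 - 1 * c)) (at_left 1)"
      by (intro tendsto_intros) auto
    then have "((\<lambda>\<delta>::real. (1 - \<delta>) / (1 - \<delta> * c)) \<longlongrightarrow> 0) (at_left 1)" by simp
    then have "(L \<longlongrightarrow> (1 + eB + (eL - eB) * 0) / (1 + eB)) (at_left 1)"
      unfolding L_def[abs_def] using eBpos by (intro tendsto_intros) auto
    then show "(L \<longlongrightarrow> 1) (at_left 1)" using eBpos by simp
  qed
qed

end
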